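(* Fix parameters $1\ge p_1\ge p_2\ge\cdots\ge p_r>0$. If $Z_{p_{i+1},p_i}$, $i=1,\dots,r-1$, are independent random variables with the indicated zero-inflated geometric distributions, then \[ \sum_{i=1}^{r-1}Z_{p_{i+1},p_i}\ \stackrel{d}{=}\ Z_{p_r,p_1}. \]
   Context: ${\rm Geom}(q)$ is the geometric distribution on $\{1,2,\dots\}$ with $\Pr(G=j)=(1-q)^{j-1}q$. For $0\le q\le p\le 1$, the zero-inflated geometric random variable is $Z_{q,p}:=B\cdot G$ where $B\sim{\rm Bernoulli}(1-q/p)$ and $G\sim{\rm Geom}(q)$ are independent. $\stackrel{d}{=}$ denotes equality in distribution. *)

theory Defs
  imports "HOL-Probability.Probability"
begin

text \<open>Geom(q) on {1,2,...}: Pr(G=j) = (1-q)^(j-1) q. The library geometric_pmf counts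
  failures on {0,1,...}, so we shift by one. (Meaningful for 0 < q <= 1.)\<close>
definition geom1_pmf :: "real \<Rightarrow> nat pmf" where
  "geom1_pmf q = map_pmf Suc (geometric_pmf q)"

definition zig_pmf :: "real \<Rightarrow> real \<Rightarrow> nat pmf" where
  "zig_pmf q p = map_pmf (\<lambda>(b, g). (if b then 1 else 0) * g)
                   (pair_pmf (bernoulli_pmf (1 - q / p)) (geom1_pmf q))"

end

theory Submission
  imports Defs
begin

lemma zig_bind:
  "zig_pmf q p = bind_pmf (bernoulli_pmf (1 - q / p)) (\<lambda>b. if b then geom1_pmf q else return_pmf 0)"
  unfolding zig_pmf_def pair_pmf_def map_bind_pmf
  by (intro bind_pmf_cong refl) (auto simp: map_bind_pmf bind_return_pmf' map_return_pmf)

lemma pmf_geom1: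
  assumes "0 < q" "q \<le> 1"
  shows "pmf (geom1_pmf q) n = (if n = 0 then 0 else q * (1 - q) ^ (n - 1))"
proof (cases n)
  case 0
  then show ?thesis unfolding geom1_pmf_def by (simp add: pmf_map_outside)
next
  case (Suc m)
  have "pmf (map_pmf Suc (geometric_pmf q)) (Suc m) = pmf (geometric_pmf q) m"
    by (rule pmf_map_inj') simp
  then show ?thesis using Suc assms unfolding geom1_pmf_def by simp
qed

lemma pmf_zig:
  assumes "0 < q" "q \<le> p" "p \<le> 1"
  shows "pmf (zig_pmf q p) n = (if n = 0 then q / p else (1 - q / p) * (q * (1 - q) ^ (n - 1)))"
proof -
  have p0: "0 < p" using assms by simp
  have b: "0 \<le> 1 - q / p" "1 - q / p \<le> 1" using assms p0 by (auto simp: field_simps)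
  show ?thesis
    unfolding zig_bind pmf_bind
    using b assms by (simp add: pmf_geom1 pmf_return)
qed


lemma pmf_sum_pair:
  "pmf (map_pmf (\<lambda>(a,b). a + b) (pair_pmf A B)) (n::nat) = (\<Sum>a\<le>n. pmf A a * pmf B (n - a))"
proof -
  have e: "(\<lambda>(a,b). a + b) -` {n} = (\<lambda>a. (a, n - a)) ` {..n}"
    by (auto simp: image_iff)
  have i: "inj_on (\<lambda>a. (a, n - a)) {..n}" by (auto simp: inj_on_def)
  show ?thesis
    unfolding pmf_map e
    by (subst measure_measure_pmf_finite) (auto simp: sum.reindex[OF i] pmf_pair)
qed

lemma zig_conv:
  assumes "0 < s" "s \<le> q" "q \<le> p" "p \<le> 1"
  shows "map_pmf (\<lambda>(a,b). a + b) (pair_pmf (zig_pmf s q) (zig_pmf q p)) = zig_pmf s p"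
proof (rule pmf_eqI)
  fix n :: nat
  have q0: "0 < q" and p0: "0 < p" using assms by auto
  note Z = pmf_zig[OF assms(1,2) order.trans[OF assms(3,4)]] pmf_zig[OF q0 assms(3,4)]
     pmf_zig[OF assms(1) order.trans[OF assms(2,3)] assms(4)]
  show "pmf (map_pmf (\<lambda>(a,b). a + b) (pair_pmf (zig_pmf s q) (zig_pmf q p))) n = pmf (zig_pmf s p) n"
  proof (cases n)
    case 0
    then show ?thesis using q0 p0 by (simp add: pmf_sum_pair Z)
  next
    case (Suc m)
    define x where "x = 1 - q"
    define y where "y = 1 - s"
    have tele: "y ^ m - x ^ m = (q - s) * (\<Sum>i<m. x ^ (m - Suc i) * y ^ i)"
      using power_diff_sumr2[of y m x] by (simp add: x_def y_def)
    have split: "(\<Sum>a\<le>Suc m. f a) = f 0 + (\<Sum>i<m. f (Suc i)) + f (Suc m)" for f :: "nat \<Rightarrow> real"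
      by (simp add: sum.atMost_shift)
    have mid: "(\<Sum>i<m. pmf (zig_pmf s q) (Suc i) * pmf (zig_pmf q p) (Suc m - Suc i))
       = (1 - s / q) * s * ((1 - q / p) * q) * (\<Sum>i<m. x ^ (m - Suc i) * y ^ i)"
      unfolding sum_distrib_left
    proof (rule sum.cong[OF refl])
      fix i assume "i \<in> {..<m}"
      then have "Suc m - Suc i = Suc (m - Suc i)" by auto
      then show "pmf (zig_pmf s q) (Suc i) * pmf (zig_pmf q p) (Suc m - Suc i) =
          (1 - s / q) * s * ((1 - q / p) * q) * (x ^ (m - Suc i) * y ^ i)"
        by (simp add: Z x_def y_def)
    qed
    have "pmf (map_pmf (\<lambda>(a,b). a + b) (pair_pmf (zig_pmf s q) (zig_pmf q p))) n
       = s / q * ((1 - q / p) * (q * x ^ m)) + (1 - s / q) * s * ((1 - q / p) * q) * (\<Sum>i<m. x ^ (m - Suc i) * y ^ i)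
         + (1 - s / q) * (s * y ^ m) * (q / p)"
      unfolding pmf_sum_pair Suc split mid by (simp add: Z x_def y_def)
    also have "(1 - s / q) * s * ((1 - q / p) * q) * (\<Sum>i<m. x ^ (m - Suc i) * y ^ i)
        = s * (1 - q / p) * ((q - s) * (\<Sum>i<m. x ^ (m - Suc i) * y ^ i))"
      using q0 by (simp add: field_simps)
    also have "\<dots> = s * (1 - q / p) * (y ^ m - x ^ m)" by (simp add: tele)
    finally have h: "q * (s * (s * y ^ m)) + p * (q * pmf (map_pmf (\<lambda>(a,b). a + b) (pair_pmf (zig_pmf s q) (zig_pmf q p))) n) = p * (q * (s * y ^ m))"
      using q0 p0 Suc by (simp add: Z y_def[symmetric] field_simps)
    have "q * (s * (s * y ^ m) + p * pmf (map_pmf (\<lambda>(a,b). a + b) (pair_pmf (zig_pmf s q) (zig_pmf q p))) n) = q * (p * (s * y ^ m))"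
      using h by (simp add: algebra_simps)
    then have "s * (s * y ^ m) + p * pmf (map_pmf (\<lambda>(a,b). a + b) (pair_pmf (zig_pmf s q) (zig_pmf q p))) n = p * (s * y ^ m)"
      using q0 by simp
    then show ?thesis using q0 p0 Suc by (simp add: Z y_def[symmetric] field_simps)
  qed
qed


lemma chain_mono:
  fixes p :: "nat \<Rightarrow> real"
  assumes "\<And>i. 1 \<le> i \<Longrightarrow> i < r \<Longrightarrow> p (Suc i) \<le> p i" "1 \<le> j" "j \<le> r"
  shows "p r \<le> p j"
  using assms
proof (induction r)
  case 0 then show ?case by simp
next
  case (Suc r)
  show ?case
  proof (cases "j = Suc r")
    case False
    then have "p r \<le> p j" using Suc by auto
    moreover have "p (Suc r) \<le> p r" using Suc False by auto
    ultimately show ?thesis by simp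
  qed simp
qed

lemma main_aux:
  fixes p :: "nat \<Rightarrow> real"
  shows "r \<ge> 1 \<Longrightarrow> p 1 \<le> 1 \<Longrightarrow> (\<And>i. 1 \<le> i \<Longrightarrow> i < r \<Longrightarrow> p (Suc i) \<le> p i) \<Longrightarrow> p r > 0 \<Longrightarrow>
    map_pmf (\<lambda>Z. \<Sum>i\<in>{1..<r}. Z i) (Pi_pmf {1..<r} 0 (\<lambda>i. zig_pmf (p (Suc i)) (p i)))
         = zig_pmf (p r) (p 1)"
proof (induction r)
  case 0 then show ?case by simp
next
  case (Suc r)
  show ?case
  proof (cases "r = 0")
    case True
    have "zig_pmf (p 1) (p 1) = return_pmf 0"
    proof (rule pmf_eqI)
      fix n
      show "pmf (zig_pmf (p 1) (p 1)) n = pmf (return_pmf 0) n"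
        using Suc.prems True by (simp add: pmf_zig pmf_return)
    qed
    then show ?thesis using True by simp
  next
    case False
    then have r1: "1 \<le> r" by simp
    have mon: "p (Suc r) \<le> p r" using Suc.prems r1 by auto
    have pr: "p r > 0" using mon Suc.prems by linarith
    have IH: "map_pmf (\<lambda>Z. \<Sum>i\<in>{1..<r}. Z i) (Pi_pmf {1..<r} 0 (\<lambda>i. zig_pmf (p (Suc i)) (p i)))
         = zig_pmf (p r) (p 1)"
      using Suc.prems r1 pr by (intro Suc.IH) auto
    have le1: "p r \<le> p 1" using chain_mono[of r p 1] Suc.prems r1 by auto
    have ins: "{1..<Suc r} = insert r {1..<r}" using r1 by auto
    have notin: "r \<notin> {1..<r}" by simp
    have "map_pmf (\<lambda>Z. \<Sum>i\<in>{1..<Suc r}. Z i) (Pi_pmf {1..<Suc r} 0 (\<lambda>i. zig_pmf (p (Suc i)) (p i)))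
       = map_pmf (\<lambda>(a,b). a + b) (pair_pmf (zig_pmf (p (Suc r)) (p r))
           (map_pmf (\<lambda>Z. \<Sum>i\<in>{1..<r}. Z i) (Pi_pmf {1..<r} 0 (\<lambda>i. zig_pmf (p (Suc i)) (p i)))))"
      unfolding ins Pi_pmf_insert[OF finite_atLeastLessThan notin] pair_map_pmf2 map_pmf_comp
      by (intro map_pmf_cong refl) (auto simp: sum.insert_remove)
    also have "\<dots> = zig_pmf (p (Suc r)) (p 1)"
      unfolding IH using zig_conv[of "p (Suc r)" "p r" "p 1"] Suc.prems mon le1 by simp
    finally show ?thesis .
  qed
qed

theorem mainTheorem3:
  fixes p :: "nat \<Rightarrow> real" and r :: nat
  assumes "r \<ge> 1"
    and "p 1 \<le> 1"
    and "\<And>i. 1 \<le> i \<Longrightarrow> i < r \<Longrightarrow> p (Suc i) \<le> p i"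
    and "p r > 0"
  shows "map_pmf (\<lambda>Z. \<Sum>i\<in>{1..<r}. Z i)
           (Pi_pmf {1..<r} 0 (\<lambda>i. zig_pmf (p (Suc i)) (p i)))
         = zig_pmf (p r) (p 1)"
  using main_aux[of r p] assms by blast

end
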